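(* Let $m\ge3$, $\mu\ge0$, $c\in\mathbb{R}^m_{\ge0}$, demands $d=(d_L,d_R)$ with $d_L\in\Delta^L$, $d_R\in\Delta^R$, and $C:=2(\|c\|_\infty+33\mu\log m)$, and assume $C>0$. Let $\Delta\ge0$ and let $x\in\Delta^m$ satisfy $$F(x)\le\min_{x'\in\Delta^m}F(x')+\frac{\Delta}{4C},\qquad F(x):=\frac1{4C}\langle c,x\rangle+\frac{\mu}{4C}H(x)+\frac14\|\mathbf{B}^\top x-d\|_1.$$ Let $\tilde x\in\Delta^m$ satisfy $\mathbf{B}^\top\tilde x=d$ and $\|\tilde x-x\|_1\le2\|\mathbf{B}^\top x-d\|_1$ (e.g. the output of the $\mathsf{OTRound}$ procedure of Altschuler–Weed–Rigollet applied to $x$). Then $$\langle c,\tilde x\rangle+\mu H(\tilde x)\le\mathrm{OPT}_\mu(d)+\Delta+\mu m^{-30}.$$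
   Context: $L,R$ are finite nonempty sets, $m=|L||R|$, and coordinates of $\mathbb{R}^m$ are indexed by pairs $(i,j)\in L\times R$. $\mathbf{B}\in\{0,1\}^{m\times(|L|+|R|)}$ is the unsigned edge-vertex incidence matrix of the complete bipartite graph on $L\cup R$: $\mathbf{B}_{(i,j),v}=1$ iff $v\in\{i,j\}$. $H(x)=\sum_i x_i\log x_i$ ($0\log0=0$, natural log). $\mathrm{OPT}_\mu(d)=\min_{x\in\Delta^m,\ \mathbf{B}^\top x=d}\ \langle c,x\rangle+\mu H(x)$. $\Delta^k$ denotes the probability simplex. *)

theory Defs
  imports Complex_Main
begin

text \<open>Coordinates of R^m are pairs (i,j) in L x R; a vector is a function on pairs,
  only its values on L x R matter.  L and R live in distinct types, so the vertex set
  of the complete bipartite graph is the disjoint union of L and R.\<close>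

definition simplex :: "'a set \<Rightarrow> ('a \<Rightarrow> real) \<Rightarrow> bool" where
  "simplex S x \<longleftrightarrow> (\<forall>p\<in>S. 0 \<le> x p) \<and> sum x S = 1"

definition xlogx :: "real \<Rightarrow> real" where
  "xlogx t = (if t = 0 then 0 else t * ln t)"

definition entropy :: "'a set \<Rightarrow> ('a \<Rightarrow> real) \<Rightarrow> real" where
  "entropy S x = (\<Sum>p\<in>S. xlogx (x p))"

definition inner_on :: "'a set \<Rightarrow> ('a \<Rightarrow> real) \<Rightarrow> ('a \<Rightarrow> real) \<Rightarrow> real" where
  "inner_on S c x = (\<Sum>p\<in>S. c p * x p)"

definition linf_on :: "'a set \<Rightarrow> ('a \<Rightarrow> real) \<Rightarrow> real" where
  "linf_on S c = Max ((\<lambda>p. \<bar>c p\<bar>) ` S)"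

definition l1_on :: "'a set \<Rightarrow> ('a \<Rightarrow> real) \<Rightarrow> real" where
  "l1_on S x = (\<Sum>p\<in>S. \<bar>x p\<bar>)"

text \<open>B^T x: row sums (vertices in L) and column sums (vertices in R).\<close>
definition rowsum :: "'b set \<Rightarrow> ('a \<times> 'b \<Rightarrow> real) \<Rightarrow> 'a \<Rightarrow> real" where
  "rowsum R x i = (\<Sum>j\<in>R. x (i, j))"

definition colsum :: "'a set \<Rightarrow> ('a \<times> 'b \<Rightarrow> real) \<Rightarrow> 'b \<Rightarrow> real" where
  "colsum L x j = (\<Sum>i\<in>L. x (i, j))"

definition marg_err :: "'a set \<Rightarrow> 'b set \<Rightarrow> ('a \<times> 'b \<Rightarrow> real) \<Rightarrow> ('a \<Rightarrow> real) \<Rightarrow> ('b \<Rightarrow> real) \<Rightarrow> real" where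
  "marg_err L R x dL dR =
     (\<Sum>i\<in>L. \<bar>rowsum R x i - dL i\<bar>) + (\<Sum>j\<in>R. \<bar>colsum L x j - dR j\<bar>)"

definition marg_eq :: "'a set \<Rightarrow> 'b set \<Rightarrow> ('a \<times> 'b \<Rightarrow> real) \<Rightarrow> ('a \<Rightarrow> real) \<Rightarrow> ('b \<Rightarrow> real) \<Rightarrow> bool" where
  "marg_eq L R x dL dR \<longleftrightarrow> (\<forall>i\<in>L. rowsum R x i = dL i) \<and> (\<forall>j\<in>R. colsum L x j = dR j)"

definition OPT :: "'a set \<Rightarrow> 'b set \<Rightarrow> ('a \<times> 'b \<Rightarrow> real) \<Rightarrow> real \<Rightarrow> ('a \<Rightarrow> real) \<Rightarrow> ('b \<Rightarrow> real) \<Rightarrow> real" where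
  "OPT L R c \<mu> dL dR = Inf {inner_on (L \<times> R) c x + \<mu> * entropy (L \<times> R) x | x.
      simplex (L \<times> R) x \<and> marg_eq L R x dL dR}"

definition Fobj :: "'a set \<Rightarrow> 'b set \<Rightarrow> ('a \<times> 'b \<Rightarrow> real) \<Rightarrow> real \<Rightarrow> real \<Rightarrow> ('a \<Rightarrow> real) \<Rightarrow> ('b \<Rightarrow> real) \<Rightarrow> ('a \<times> 'b \<Rightarrow> real) \<Rightarrow> real" where
  "Fobj L R c \<mu> C dL dR x = inner_on (L \<times> R) c x / (4 * C) + \<mu> / (4 * C) * entropy (L \<times> R) x
      + marg_err L R x dL dR / 4"

end

theory Submission imports Defs begin

lemma xlogx_eq: "xlogx t = t * ln t" by (simp add: xlogx_def)

lemma hlow: assumes "(t::real) \<ge> 0" shows "t * ln t + K * t \<ge> - exp (-K-1)"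
proof (cases "t = 0")
  case True then show ?thesis by simp
next
  case False
  hence tp: "t > 0" using assms by simp
  define t0 where "t0 = exp (-K-1)"
  have t0p: "t0 > 0" by (simp add: t0_def)
  have "ln (t0 / t) \<le> t0 / t - 1" using ln_le_minus_one[of "t0/t"] t0p tp by simp
  hence "ln t0 - ln t \<le> t0 / t - 1" using tp t0p by (simp add: ln_div)
  hence "-K - 1 - ln t \<le> t0 / t - 1" by (simp add: t0_def)
  hence "t * (-K - 1 - ln t) \<le> t * (t0 / t - 1)" using tp by (simp add: mult_left_mono)
  hence "t * (-K - 1 - ln t) \<le> t0 - t" using tp by (simp add: algebra_simps)
  thus ?thesis unfolding t0_def by (simp add: algebra_simps)
qed

lemma lemA: assumes "0 \<le> (a::real)" "a \<le> b" shows "a * ln a - b * ln b \<le> K * (b - a) + exp (-K-1)"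
proof (cases "a \<le> exp (-K)")
  case True
  have "a * ln a + K * a \<le> 0"
  proof (cases "a = 0")
    case False
    hence ap: "a > 0" using assms by linarith
    have "ln a \<le> -K" using True ap by (metis ln_exp ln_le_cancel_iff exp_gt_zero)
    hence "a * ln a \<le> a * (-K)" using ap using mult_left_mono[of "ln a" "-K" a] by simp
    thus ?thesis by (simp add: algebra_simps)
  qed simp
  moreover have "b * ln b + K * b \<ge> - exp (-K-1)" using hlow assms by force
  ultimately show ?thesis by (simp add: algebra_simps)
next
  case False
  hence ap: "a > 0" by (smt (verit) exp_gt_zero)
  have bp: "b > 0" using ap assms by simp
  have la: "ln a > -K" using False ap by (metis exp_ln linorder_not_le exp_less_cancel_iff)
  have lab: "ln a \<le> ln b" using ap assms by simp
  have "(b - a) * ln b \<ge> (b - a) * (-K)" using la lab assms by (intro mult_left_mono) auto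
  moreover have "a * (ln b - ln a) \<ge> 0" using ap lab by simp
  moreover have "b * ln b - a * ln a = (b - a) * ln b + a * (ln b - ln a)" by (simp add: algebra_simps)
  moreover have "exp (-K-1) > 0" by simp
  ultimately show ?thesis by (simp add: algebra_simps) (smt (verit) exp_gt_zero)
qed

lemma lemB: assumes "0 \<le> (a::real)" "a \<le> b" "b \<le> 1" "K \<ge> 1" shows "b * ln b - a * ln a \<le> K * (b - a)"
proof (cases "a = 0")
  case True
  have "b * ln b \<le> 0"
  proof (cases "b = 0")
    case False
    hence "b > 0" using assms by linarith
    hence "ln b \<le> 0" using assms by simp
    thus ?thesis using assms by (simp add: mult_nonneg_nonpos)
  qed simp
  moreover have "K * b \<ge> 0" using assms by simp
  ultimately show ?thesis using True by simp
next
  case False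
  hence ap: "a > 0" using assms by simp
  have bp: "b > 0" using ap assms by simp
  have "ln b \<le> 0" using assms bp by simp
  hence 1: "(b - a) * ln b \<le> 0" using assms by (simp add: mult_nonneg_nonpos)
  have "ln (b / a) \<le> b / a - 1" using ln_le_minus_one[of "b/a"] ap bp by simp
  hence "ln b - ln a \<le> b / a - 1" using ap bp by (simp add: ln_div)
  hence "a * (ln b - ln a) \<le> a * (b / a - 1)" using ap by (simp add: mult_left_mono)
  hence 2: "a * (ln b - ln a) \<le> b - a" using ap by (simp add: algebra_simps)
  have 3: "b - a \<le> K * (b - a)" using assms by (simp add: mult_le_cancel_right1)
  have "b * ln b - a * ln a = (b - a) * ln b + a * (ln b - ln a)" by (simp add: algebra_simps)
  with 1 2 3 show ?thesis by linarith
qed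

lemma ent_lip: assumes "0 \<le> (a::real)" "a \<le> 1" "0 \<le> b" "b \<le> 1" "K \<ge> 1"
  shows "xlogx a - xlogx b \<le> K * \<bar>a - b\<bar> + exp (-K-1)"
proof (cases "a \<le> b")
  case True
  then show ?thesis using lemA[of a b K] assms by (simp add: xlogx_eq abs_if)
next
  case False
  then show ?thesis using lemB[of b a K] assms by (simp add: xlogx_eq abs_if) (smt (verit) exp_gt_zero)
qed

lemma xlogx_low: assumes "0 \<le> t" shows "xlogx t \<ge> -1"
  using hlow[OF assms, of 0] by (simp add: xlogx_eq) (smt (verit) exp_le_one_iff)

theorem mainTheorem13:
  fixes L :: "'a set" and R :: "'b set"
    and c x xt :: "'a \<times> 'b \<Rightarrow> real"
    and dL :: "'a \<Rightarrow> real" and dR :: "'b \<Rightarrow> real"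
    and \<mu> C \<Delta> :: real and m :: nat
  assumes "finite L" "L \<noteq> {}" "finite R" "R \<noteq> {}"
    and "m = card L * card R" "m \<ge> 3"
    and "\<mu> \<ge> 0"
    and "\<forall>p\<in>L \<times> R. c p \<ge> 0"
    and "simplex L dL" "simplex R dR"
    and "C = 2 * (linf_on (L \<times> R) c + 33 * \<mu> * ln (real m))" "C > 0"
    and "\<Delta> \<ge> 0"
    and "simplex (L \<times> R) x"
    and "Fobj L R c \<mu> C dL dR x
           \<le> Inf {Fobj L R c \<mu> C dL dR x' | x'. simplex (L \<times> R) x'} + \<Delta> / (4 * C)"
    and "simplex (L \<times> R) xt" "marg_eq L R xt dL dR"
    and "l1_on (L \<times> R) (\<lambda>p. xt p - x p) \<le> 2 * marg_err L R x dL dR"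
  shows "inner_on (L \<times> R) c xt + \<mu> * entropy (L \<times> R) xt
           \<le> OPT L R c \<mu> dL dR + \<Delta> + \<mu> * real m powr (-30)"
proof -
  define S where "S = L \<times> R"
  have fin: "finite S" using assms(1,3) by (simp add: S_def)
  have cardS: "card S = m" using assms(5) by (simp add: S_def card_cartesian_product)
  have mpos: "real m \<ge> 3" using assms(6) by simp
  define G where "G y = inner_on S c y + \<mu> * entropy S y" for y
  define e where "e = marg_err L R x dL dR"
  define \<delta> where "\<delta> = l1_on S (\<lambda>p. xt p - x p)"
  define K where "K = 33 * ln (real m)"
  define Li where "Li = linf_on S c"
  have unit: "0 \<le> y p \<and> y p \<le> 1" if "simplex S y" "p \<in> S" for y p
  proof -
    have nn: "\<forall>q\<in>S. 0 \<le> y q" and s1: "sum y S = 1" using that(1) by (auto simp: simplex_def)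
    have "y p \<le> sum y S" using member_le_sum[of p S y] nn that(2) fin by auto
    thus ?thesis using nn s1 that(2) by auto
  qed
  have sx: "simplex S x" and sxt: "simplex S xt" using assms(14,16) by (auto simp: S_def)
  have lnm: "ln (real m) \<ge> 2/3"
  proof -
    have "ln (1 / real m) \<le> 1 / real m - 1" using ln_le_minus_one[of "1/real m"] mpos by simp
    hence "- ln (real m) \<le> 1 / real m - 1" using mpos by (simp add: ln_div)
    moreover have "1 / real m \<le> 1/3" using mpos by (simp add: divide_simps)
    ultimately show ?thesis by linarith
  qed
  have K1: "K \<ge> 1" using lnm by (simp add: K_def)
  have ent: "entropy S xt - entropy S x \<le> K * \<delta> + real m * exp (-K-1)"
  proof -
    have "entropy S xt - entropy S x = (\<Sum>p\<in>S. xlogx (xt p) - xlogx (x p))"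
      by (simp add: entropy_def sum_subtractf)
    also have "\<dots> \<le> (\<Sum>p\<in>S. K * \<bar>xt p - x p\<bar> + exp (-K-1))"
      using unit[OF sx] unit[OF sxt] K1 by (intro sum_mono ent_lip) auto
    also have "\<dots> = K * \<delta> + real m * exp (-K-1)"
      by (simp add: sum.distrib sum_distrib_left \<delta>_def l1_on_def cardS)
    finally show ?thesis .
  qed
  have expb: "real m * exp (-K-1) \<le> real m powr (-30)"
  proof -
    have "exp (-K-1) \<le> exp (-K)" by simp
    also have "exp (-K) = real m powr (-33)" using mpos by (simp add: K_def powr_def)
    finally have "real m * exp (-K-1) \<le> real m powr 1 * real m powr (-33)"
      using mpos by (simp add: mult_left_mono)
    also have "\<dots> = real m powr (-32)" using powr_add[of "real m" 1 "-33"] by simp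
    also have "\<dots> \<le> real m powr (-30)" using mpos by (intro powr_mono) auto
    finally show ?thesis .
  qed
  have cle: "\<bar>c p\<bar> \<le> Li" if "p \<in> S" for p
    unfolding Li_def linf_on_def using fin that by (intro Max_ge) auto
  have inn: "inner_on S c xt - inner_on S c x \<le> Li * \<delta>"
  proof -
    have "inner_on S c xt - inner_on S c x = (\<Sum>p\<in>S. c p * (xt p - x p))"
      by (simp add: inner_on_def sum_subtractf algebra_simps)
    also have "\<dots> \<le> (\<Sum>p\<in>S. Li * \<bar>xt p - x p\<bar>)"
    proof (intro sum_mono)
      fix p assume "p \<in> S"
      have "c p * (xt p - x p) \<le> \<bar>c p\<bar> * \<bar>xt p - x p\<bar>"
        by (metis abs_ge_self abs_mult)
      also have "\<dots> \<le> Li * \<bar>xt p - x p\<bar>" using cle[OF \<open>p \<in> S\<close>] by (simp add: mult_right_mono)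
      finally show "c p * (xt p - x p) \<le> Li * \<bar>xt p - x p\<bar>" .
    qed
    also have "\<dots> = Li * \<delta>" by (simp add: \<delta>_def l1_on_def sum_distrib_left)
    finally show ?thesis .
  qed
  have \<delta>e: "\<delta> \<le> 2 * e" using assms(18) by (simp add: \<delta>_def e_def S_def)
  have \<delta>0: "\<delta> \<ge> 0" by (simp add: \<delta>_def l1_on_def sum_nonneg)
  have Ceq: "C = 2 * (Li + \<mu> * K)" using assms(11) by (simp add: Li_def K_def S_def)
  have key: "G xt - G x \<le> C * e + \<mu> * real m powr (-30)"
  proof -
    have "\<mu> * (entropy S xt - entropy S x) \<le> \<mu> * (K * \<delta> + real m powr (-30))"
      using ent expb assms(7) by (intro mult_left_mono) auto
    hence "G xt - G x \<le> Li * \<delta> + \<mu> * (K * \<delta> + real m powr (-30))"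
      using inn by (simp add: G_def algebra_simps)
    also have "\<dots> = (C/2) * \<delta> + \<mu> * real m powr (-30)" by (simp add: Ceq algebra_simps)
    also have "\<dots> \<le> (C/2) * (2*e) + \<mu> * real m powr (-30)"
      using \<delta>e assms(12) by (intro add_right_mono mult_left_mono) auto
    finally show ?thesis by simp
  qed
  define FS where "FS = {Fobj L R c \<mu> C dL dR x' | x'. simplex (L \<times> R) x'}"
  have bdd: "bdd_below FS"
  proof (rule bdd_belowI)
    fix z assume "z \<in> FS"
    then obtain y where z: "z = Fobj L R c \<mu> C dL dR y" and sy: "simplex S y" by (auto simp: FS_def S_def)
    have i0: "inner_on S c y \<ge> 0" unfolding inner_on_def
      using assms(8) unit[OF sy] by (intro sum_nonneg) (auto simp: S_def)
    have "entropy S y \<ge> (\<Sum>p\<in>S. -1)" unfolding entropy_def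
      using unit[OF sy] by (intro sum_mono xlogx_low) auto
    hence eb: "entropy S y \<ge> - real m" using cardS by simp
    have m0: "marg_err L R y dL dR \<ge> 0" by (simp add: marg_err_def sum_nonneg)
    have "\<mu> / (4*C) * entropy S y \<ge> \<mu> / (4*C) * (- real m)"
      using eb assms(7,12) by (intro mult_left_mono) auto
    moreover have "inner_on S c y / (4*C) \<ge> 0" using i0 assms(12) by simp
    ultimately show "\<mu> / (4*C) * (- real m) \<le> z" using m0
      by (simp add: z Fobj_def S_def)
  qed
  have main: "G xt - \<Delta> - \<mu> * real m powr (-30) \<le> G y" if sy: "simplex S y" and my: "marg_eq L R y dL dR" for y
  proof -
    have m0: "marg_err L R y dL dR = 0" using my by (simp add: marg_err_def marg_eq_def)
    have "y \<in> {x'. simplex (L \<times> R) x'}" using sy by (simp add: S_def)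
    hence "Fobj L R c \<mu> C dL dR y \<in> FS" by (auto simp: FS_def)
    hence "Inf FS \<le> Fobj L R c \<mu> C dL dR y" using bdd by (rule cInf_lower)
    hence "Fobj L R c \<mu> C dL dR x \<le> Fobj L R c \<mu> C dL dR y + \<Delta> / (4*C)"
      using assms(15) by (simp add: FS_def)
    hence "G x / (4*C) + e / 4 \<le> G y / (4*C) + \<Delta> / (4*C)"
      using m0 by (simp add: Fobj_def G_def e_def S_def add_divide_distrib)
    hence "(G x + C * e) / (4*C) \<le> (G y + \<Delta>) / (4*C)"
      using assms(12) by (simp add: field_simps)
    hence "G x + C * e \<le> G y + \<Delta>" using assms(12) by (simp add: divide_le_cancel)
    thus ?thesis using key by linarith
  qed
  have "G xt - \<Delta> - \<mu> * real m powr (-30) \<le> OPT L R c \<mu> dL dR"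
    unfolding OPT_def
  proof (rule cInf_greatest)
    show "{inner_on (L \<times> R) c x + \<mu> * entropy (L \<times> R) x |x. simplex (L \<times> R) x \<and> marg_eq L R x dL dR} \<noteq> {}"
      using assms(16,17) by blast
  next
    fix z assume "z \<in> {inner_on (L \<times> R) c x + \<mu> * entropy (L \<times> R) x |x. simplex (L \<times> R) x \<and> marg_eq L R x dL dR}"
    then obtain y where "z = G y" "simplex S y" "marg_eq L R y dL dR" by (auto simp: G_def S_def)
    thus "G xt - \<Delta> - \<mu> * real m powr (-30) \<le> z" using main by simp
  qed
  thus ?thesis by (simp add: G_def S_def)
qed

end
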